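(* The normalizer of $\widehat{\operatorname{IET}^{+}_{\mathrm{rc}}}$ in $\widehat{\operatorname{IET}^{\bowtie}}$ is $\widehat{\operatorname{IET}^{+}_{\mathrm{rc}}}$.
   Context: $X=[0,1[$. $\widehat{\operatorname{IET}^{\bowtie}}$ is the group of bijections $f:X\to X$ for which there is a finite partition of $X$ into intervals $[a,b[$ such that on each open interval $]a,b[$, $f$ has the form $x\mapsto x+c$ or $x\mapsto -x+c$; $\widehat{\operatorname{IET}^{+}}$ is the subgroup of those for which only the form $x\mapsto x+c$ occurs, and $\widehat{\operatorname{IET}^{+}_{\mathrm{rc}}}$ is the subgroup of right-continuous elements of $\widehat{\operatorname{IET}^{+}}$. *)

theory Defs
  imports "HOL-Analysis.Analysis"
begin

text \<open>The unit interval X = [0,1[. Maps X to X are represented as functions real to real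
  that are the identity outside X, so that equality of maps is plain function equality.\<close>

definition IX :: "real set" where "IX = {0..<1}"

definition piecewise_isometric :: "bool \<Rightarrow> (real \<Rightarrow> real) \<Rightarrow> bool" where
  "piecewise_isometric flips f \<longleftrightarrow>
     (\<exists>(n::nat) (a::nat \<Rightarrow> real). a 0 = 0 \<and> a n = 1 \<and> (\<forall>i<n. a i < a (Suc i)) \<and>
        (\<forall>i<n. \<exists>c::real.
            (\<forall>x\<in>{a i<..<a (Suc i)}. f x = x + c) \<or>
            (flips \<and> (\<forall>x\<in>{a i<..<a (Suc i)}. f x = - x + c))))"

definition IET_bowtie :: "(real \<Rightarrow> real) set" where
  "IET_bowtie = {f. bij_betw f IX IX \<and> (\<forall>x. x \<notin> IX \<longrightarrow> f x = x) \<and> piecewise_isometric True f}"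

definition IET_plus :: "(real \<Rightarrow> real) set" where
  "IET_plus = {f. bij_betw f IX IX \<and> (\<forall>x. x \<notin> IX \<longrightarrow> f x = x) \<and> piecewise_isometric False f}"

definition IET_plus_rc :: "(real \<Rightarrow> real) set" where
  "IET_plus_rc = {f \<in> IET_plus. \<forall>x\<in>IX. continuous (at_right x) f}"

definition normalizer :: "(real \<Rightarrow> real) set \<Rightarrow> (real \<Rightarrow> real) set \<Rightarrow> (real \<Rightarrow> real) set" where
  "normalizer G H = {g \<in> G. (\<lambda>h. g \<circ> h \<circ> inv g) ` H = H}"

end

theory Submission
  imports Defs
begin

definition rloc :: "(real \<Rightarrow> real) \<Rightarrow> real \<Rightarrow> bool" where
  "rloc f x \<longleftrightarrow> (\<exists>d>0. \<forall>y. x \<le> y \<and> y < x + d \<longrightarrow> f y = y + (f x - x))"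

definition lloc :: "(real \<Rightarrow> real) \<Rightarrow> real \<Rightarrow> bool" where
  "lloc f x \<longleftrightarrow> (\<exists>d>0. \<forall>y. x - d < y \<and> y \<le> x \<longrightarrow> f y = y + (f x - x))"

definition good :: "real set \<Rightarrow> (real \<Rightarrow> real) \<Rightarrow> bool" where
  "good S f \<longleftrightarrow> finite S \<and> (\<forall>x\<in>IX. rloc f x) \<and> (\<forall>x\<in>IX - S. lloc f x)"

lemma find_piece_aux:
  fixes a :: "nat \<Rightarrow> real"
  shows "a 0 \<le> x \<Longrightarrow> x < a m \<Longrightarrow> \<exists>i<m. a i \<le> x \<and> x < a (Suc i)"
proof (induction m)
  case 0 then show ?case by simp
next
  case (Suc m)
  show ?case
  proof (cases "x < a m")
    case True
    then obtain i where "i<m" "a i \<le> x \<and> x < a (Suc i)" using Suc by auto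
    then show ?thesis by (intro exI[of _ i]) auto
  next
    case False then show ?thesis using Suc.prems by (intro exI[of _ m]) auto
  qed
qed

lemma find_piece:
  fixes a :: "nat \<Rightarrow> real"
  assumes "a 0 = 0" "a n = 1" "x \<in> IX"
  shows "\<exists>i<n. a i \<le> x \<and> x < a (Suc i)"
  using find_piece_aux[of a x n] assms by (auto simp: IX_def)

lemma rloc_rc:
  assumes "rloc f x" shows "continuous (at_right x) f"
proof -
  obtain d where d: "d > 0" "\<And>y. x \<le> y \<Longrightarrow> y < x + d \<Longrightarrow> f y = y + (f x - x)"
    using assms unfolding rloc_def by blast
  have ev: "eventually (\<lambda>y. y + (f x - x) = f y) (at_right x)"
    unfolding eventually_at_right_field
  proof (intro exI[of _ "x + d"] conjI allI impI)
    show "x < x + d" using d(1) by simp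
    fix y assume "x < y" "y < x + d"
    then show "y + (f x - x) = f y" using d(2)[of y] by simp
  qed
  have "((\<lambda>y. y + (f x - x)) \<longlongrightarrow> x + (f x - x)) (at_right x)"
    by (intro tendsto_intros)
  then have "(f \<longlongrightarrow> f x) (at_right x)"
    using Lim_transform_eventually[OF _ ev] by simp
  then show ?thesis unfolding continuous_within .
qed

lemma bij_IX:
  assumes "bij_betw f IX IX" "\<forall>x. x \<notin> IX \<longrightarrow> f x = x"
  shows "bij f"
proof -
  have "inj f"
  proof (rule injI)
    fix x y assume e: "f x = f y"
    show "x = y"
    proof (cases "x \<in> IX"; cases "y \<in> IX")
      assume "x \<in> IX" "y \<in> IX" then show ?thesis using e assms(1) by (metis bij_betw_iff_bijections)
    next
      assume "x \<in> IX" "y \<notin> IX" then show ?thesis using e assms by (metis bij_betwE)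
    next
      assume "x \<notin> IX" "y \<in> IX" then show ?thesis using e assms by (metis bij_betwE)
    next
      assume "x \<notin> IX" "y \<notin> IX" then show ?thesis using e assms by metis
    qed
  qed
  moreover have "surj f"
  proof -
    have "y \<in> range f" for y
    proof (cases "y \<in> IX")
      case True then show ?thesis using assms(1) by (metis bij_betw_imp_surj_on rangeI image_iff)
    next
      case False then show ?thesis using assms(2) by (metis rangeI)
    qed
    then show ?thesis by auto
  qed
  ultimately show ?thesis by (simp add: bij_def)
qed

lemma inv_IX:
  assumes "bij_betw f IX IX" "\<forall>x. x \<notin> IX \<longrightarrow> f x = x"
  shows "bij_betw (inv f) IX IX" "\<forall>x. x \<notin> IX \<longrightarrow> inv f x = x"
    "\<And>x. inv f (f x) = x" "\<And>x. f (inv f x) = x"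
proof -
  have b: "bij f" using bij_IX assms by blast
  show fi: "\<And>x. inv f (f x) = x" using b by (simp add: bij_is_inj)
  show if': "\<And>x. f (inv f x) = x" using b by (simp add: bij_is_surj surj_f_inv_f)
  show "\<forall>x. x \<notin> IX \<longrightarrow> inv f x = x" using assms(2) fi by metis
  show "bij_betw (inv f) IX IX"
  proof (rule bij_betw_byWitness[where f'=f])
    show "\<forall>a\<in>IX. f (inv f a) = a" using if' by simp
    show "\<forall>a\<in>IX. inv f (f a) = a" using fi by simp
    show "f ` IX \<subseteq> IX" using assms(1) bij_betw_imp_surj_on by blast
    show "inv f ` IX \<subseteq> IX"
    proof
      fix y assume "y \<in> inv f ` IX"
      then obtain z where z: "z \<in> IX" "y = inv f z" by auto
      show "y \<in> IX"
      proof (rule ccontr)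
        assume "y \<notin> IX" then have "f y = y" using assms(2) by blast
        then show False using z if' \<open>y \<notin> IX\<close> by metis
      qed
    qed
  qed
qed


lemma finite_partition:
  assumes "finite S"
  shows "\<exists>n (a::nat\<Rightarrow>real). a 0 = 0 \<and> a n = 1 \<and> (\<forall>i<n. a i < a (Suc i)) \<and>
    (\<forall>i\<le>n. 0 \<le> a i \<and> a i \<le> 1) \<and> (\<forall>i<n. \<forall>s\<in>S. \<not>(a i < s \<and> s < a (Suc i)))"
proof -
  define T where "T = {0,1} \<union> (S \<inter> {0<..<1::real})"
  have fT: "finite T" using assms by (simp add: T_def)
  define xs where "xs = sorted_list_of_set T"
  have set: "set xs = T" using fT by (simp add: xs_def)
  have ss: "sorted_wrt (<) xs" using strict_sorted_list_of_set[of T] by (simp add: xs_def)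
  have lt: "\<And>i j. i < j \<Longrightarrow> j < length xs \<Longrightarrow> xs!i < xs!j"
    using sorted_wrt_nth_less[OF ss] by blast
  have mem: "\<And>i. i < length xs \<Longrightarrow> xs ! i \<in> T" using set nth_mem by metis
  have T01: "T \<subseteq> {0..1}" by (auto simp: T_def)
  have "card {0,1::real} \<le> card T" using fT by (intro card_mono) (auto simp: T_def)
  then have len: "length xs \<ge> 2" using fT by (simp add: xs_def)
  define n where "n = length xs - 1"
  have nl: "n < length xs" "Suc n = length xs" using len by (auto simp: n_def)
  have a0: "xs ! 0 = 0"
  proof -
    have "0 \<in> set xs" using set by (simp add: T_def)
    then obtain j where j: "j < length xs" "xs ! j = 0" by (metis in_set_conv_nth)
    show ?thesis
    proof (cases "j = 0")
      case True then show ?thesis using j by simp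
    next
      case False
      then have "xs ! 0 < 0" using lt[of 0 j] j by simp
      moreover have "0 < length xs" using len by linarith
      then have "xs ! 0 \<in> T" using mem by blast
      then have "xs ! 0 \<ge> 0" using T01 by auto
      ultimately show ?thesis by simp
    qed
  qed
  have an: "xs ! n = 1"
  proof -
    have "1 \<in> set xs" using set by (simp add: T_def)
    then obtain j where j: "j < length xs" "xs ! j = 1" by (metis in_set_conv_nth)
    show ?thesis
    proof (cases "j = n")
      case True then show ?thesis using j by simp
    next
      case False
      then have "j < n" using j nl by simp
      then have "1 < xs ! n" using lt[of j n] j nl by simp
      moreover have "xs ! n \<in> T" using mem[of n] nl by simp
      then have "xs ! n \<le> 1" using T01 by auto
      ultimately show ?thesis by simp
    qed
  qed
  show ?thesis
  proof (intro exI[of _ n] exI[of _ "\<lambda>i. xs ! i"] conjI allI impI ballI)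
    show "xs ! 0 = 0" by (rule a0)
    show "xs ! n = 1" by (rule an)
    fix i assume "i < n" then show "xs ! i < xs ! Suc i" using lt nl by simp
  next
    fix i assume "i \<le> n" then have "xs ! i \<in> T" using mem[of i] nl by simp
    then show "0 \<le> xs ! i" "xs ! i \<le> 1" using T01 by auto
  next
    fix i s assume i: "i < n" and s: "s \<in> S"
    show "\<not> (xs ! i < s \<and> s < xs ! Suc i)"
    proof
      assume h: "xs ! i < s \<and> s < xs ! Suc i"
      have "xs ! i \<in> T" "xs ! Suc i \<in> T" using mem[of i] mem[of "Suc i"] i nl by simp_all
      then have "0 \<le> xs ! i" "xs ! Suc i \<le> 1" using T01 by auto
      then have "s \<in> T" using h s by (auto simp: T_def)
      then obtain j where j: "j < length xs" "xs ! j = s" using set by (metis in_set_conv_nth)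
      have "i < j"
      proof (rule ccontr)
        assume "\<not> i < j" then have "j \<le> i" by simp
        have "i < length xs" using i nl by simp
        then have "xs ! j \<le> xs ! i" using lt[of j i] \<open>j \<le> i\<close> by (cases "j = i") auto
        then show False using h j by simp
      qed
      moreover have "j < Suc i"
      proof (rule ccontr)
        assume "\<not> j < Suc i" then have "Suc i \<le> j" by simp
        then have "xs ! Suc i \<le> xs ! j" using lt[of "Suc i" j] j by (cases "j = Suc i") auto
        then show False using h j by simp
      qed
      ultimately show False by simp
    qed
  qed
qed

lemma H_iff:
  "f \<in> IET_plus_rc \<longleftrightarrow> bij_betw f IX IX \<and> (\<forall>x. x \<notin> IX \<longrightarrow> f x = x) \<and> (\<exists>S. good S f)"
proof
  assume f: "f \<in> IET_plus_rc"
  then have b: "bij_betw f IX IX" "\<forall>x. x \<notin> IX \<longrightarrow> f x = x" "piecewise_isometric False f"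
    and rc: "\<forall>x\<in>IX. continuous (at_right x) f"
    by (auto simp: IET_plus_rc_def IET_plus_def)
  obtain n a where a0: "a 0 = 0" and an: "a n = 1" and am: "\<forall>i<n. a i < a (Suc i)"
    and pc: "\<forall>i<n. \<exists>c. \<forall>x\<in>{a i<..<a (Suc i)}. f x = x + c"
    using b(3) unfolding piecewise_isometric_def by auto
  have piece: "\<exists>i c. i < n \<and> a i \<le> x \<and> x < a (Suc i) \<and> f x = x + c \<and>
      (\<forall>y\<in>{a i<..<a (Suc i)}. f y = y + c)" if x: "x \<in> IX" for x
  proof -
    obtain i where i: "i < n" "a i \<le> x" "x < a (Suc i)" using find_piece[OF a0 an x] by auto
    obtain c where c: "\<forall>y\<in>{a i<..<a (Suc i)}. f y = y + c" using pc i by blast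
    have "f x = x + c"
    proof (cases "x = a i")
      case True
      have ev: "eventually (\<lambda>y. y + c = f y) (at_right x)"
        unfolding eventually_at_right_field using c i True by (intro exI[of _ "a (Suc i)"]) auto
      have "((\<lambda>y. y + c) \<longlongrightarrow> x + c) (at_right x)" by (intro tendsto_intros)
      then have t1: "(f \<longlongrightarrow> x + c) (at_right x)" using Lim_transform_eventually[OF _ ev] by simp
      have t2: "(f \<longlongrightarrow> f x) (at_right x)" using rc x unfolding continuous_within by blast
      show ?thesis using tendsto_unique[OF trivial_limit_at_right_real t2 t1] .
    next
      case False then show ?thesis using c i by auto
    qed
    then show ?thesis using i c by blast
  qed
  have "good (a ` {..n}) f"
    unfolding good_def
  proof (intro conjI ballI)
    show "finite (a ` {..n})" by simp
  next
    fix x assume x: "x \<in> IX"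
    obtain i c where ic: "i < n" "a i \<le> x" "x < a (Suc i)" "f x = x + c"
      "\<forall>y\<in>{a i<..<a (Suc i)}. f y = y + c" using piece[OF x] by blast
    show "rloc f x" unfolding rloc_def
    proof (intro exI[of _ "a (Suc i) - x"] conjI allI impI)
      show "0 < a (Suc i) - x" using ic by simp
      fix y assume "x \<le> y \<and> y < x + (a (Suc i) - x)"
      then have y: "x \<le> y" "y < a (Suc i)" by simp_all
      show "f y = y + (f x - x)"
      proof (cases "y = x")
        case True then show ?thesis by simp
      next
        case False
        then have "y \<in> {a i<..<a (Suc i)}" using y ic(2) by simp
        then have "f y = y + c" using ic(5) by blast
        then show ?thesis using ic(4) by simp
      qed
    qed
  next
    fix x assume x: "x \<in> IX - a ` {..n}"
    obtain i c where ic: "i < n" "a i \<le> x" "x < a (Suc i)" "f x = x + c"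
      "\<forall>y\<in>{a i<..<a (Suc i)}. f y = y + c" using piece x by blast
    have "x \<noteq> a i" using x ic by auto
    then have ai: "a i < x" using ic by simp
    show "lloc f x" unfolding lloc_def
    proof (intro exI[of _ "x - a i"] conjI allI impI)
      show "0 < x - a i" using ai by simp
      fix y assume "x - (x - a i) < y \<and> y \<le> x"
      then have "y \<in> {a i<..<a (Suc i)}" using ic(3) by simp
      then have "f y = y + c" using ic(5) by blast
      then show "f y = y + (f x - x)" using ic(4) by simp
    qed
  qed
  then show "bij_betw f IX IX \<and> (\<forall>x. x \<notin> IX \<longrightarrow> f x = x) \<and> (\<exists>S. good S f)" using b by blast
next
  assume "bij_betw f IX IX \<and> (\<forall>x. x \<notin> IX \<longrightarrow> f x = x) \<and> (\<exists>S. good S f)"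
  then obtain S where b: "bij_betw f IX IX" "\<forall>x. x \<notin> IX \<longrightarrow> f x = x" and g: "good S f" by blast
  have fS: "finite S" and rl: "\<forall>x\<in>IX. rloc f x" and ll: "\<forall>x\<in>IX - S. lloc f x"
    using g by (auto simp: good_def)
  have rc: "\<forall>x\<in>IX. continuous (at_right x) f" using rl rloc_rc by blast
  obtain n a where a0: "a 0 = (0::real)" and an: "a n = 1" and am: "\<forall>i<n. a i < a (Suc i)"
    and a01: "\<forall>i\<le>n. 0 \<le> a i \<and> a i \<le> 1" and aS: "\<forall>i<n. \<forall>s\<in>S. \<not>(a i < s \<and> s < a (Suc i))"
    using finite_partition[OF fS] by blast
  have "\<exists>c. \<forall>x\<in>{a i<..<a (Suc i)}. f x = x + c" if i: "i < n" for i
  proof -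
    define A where "A = {a i<..<a (Suc i)}"
    define m where "m = (a i + a (Suc i)) / 2"
    have mA: "m \<in> A" using am i by (auto simp: A_def m_def)
    have loc: "\<forall>t\<in>A. eventually (\<lambda>b. f t - t = f b - b) (at t within A)"
    proof
      fix t assume t: "t \<in> A"
      have "0 \<le> a i" "a (Suc i) \<le> 1" using a01 i by auto
      then have tIX: "t \<in> IX" using t by (auto simp: A_def IX_def)
      have tS: "t \<notin> S" using t aS i by (auto simp: A_def)
      obtain d1 where d1: "d1 > 0" "\<forall>y. t \<le> y \<and> y < t + d1 \<longrightarrow> f y = y + (f t - t)"
        using rl tIX unfolding rloc_def by blast
      obtain d2 where d2: "d2 > 0" "\<forall>y. t - d2 < y \<and> y \<le> t \<longrightarrow> f y = y + (f t - t)"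
        using ll tIX tS unfolding lloc_def by blast
      show "eventually (\<lambda>b. f t - t = f b - b) (at t within A)"
        unfolding eventually_at
      proof (intro exI[of _ "min d1 d2"] conjI ballI impI)
        show "0 < min d1 d2" using d1(1) d2(1) by simp
        fix y assume "y \<in> A" "y \<noteq> t \<and> dist y t < min d1 d2"
        then have "\<bar>y - t\<bar> < d1" "\<bar>y - t\<bar> < d2" by (simp_all add: dist_real_def)
        then have "y - t < d1" "t - y < d2" by (simp_all add: abs_less_iff)
        show "f t - t = f y - y"
        proof (cases "t \<le> y")
          case True
          then have "t \<le> y \<and> y < t + d1" using \<open>y - t < d1\<close> by linarith
          then have "f y = y + (f t - t)" using d1(2) by blast
          then show ?thesis by simp
        next
          case False
          then have "t - d2 < y \<and> y \<le> t" using \<open>t - y < d2\<close> by linarith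
          then have "f y = y + (f t - t)" using d2(2) by blast
          then show ?thesis by simp
        qed
      qed
    qed
    have conA: "connected A" unfolding A_def by (rule connected_Ioo)
    have "\<forall>x\<in>A. f x = x + (f m - m)"
    proof
      fix x assume "x \<in> A"
      from connected_local_const[where f="\<lambda>b. f b - b", OF conA mA this loc] show "f x = x + (f m - m)" by simp
    qed
    then show ?thesis unfolding A_def by blast
  qed
  then have pw: "\<forall>i<n. \<exists>c. \<forall>x\<in>{a i<..<a (Suc i)}. f x = x + c" by blast
  have "piecewise_isometric False f"
    unfolding piecewise_isometric_def
    apply (rule exI[of _ n], rule exI[of _ a])
    using a0 an am pw by simp
  then show "f \<in> IET_plus_rc" using b rc by (simp add: IET_plus_rc_def IET_plus_def)
qed


lemma H_comp:
  assumes "f \<in> IET_plus_rc" "g \<in> IET_plus_rc"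
  shows "f \<circ> g \<in> IET_plus_rc"
proof -
  obtain Sf where bf: "bij_betw f IX IX" "\<forall>x. x \<notin> IX \<longrightarrow> f x = x" "good Sf f"
    using assms(1) H_iff by blast
  obtain Sg where bg: "bij_betw g IX IX" "\<forall>x. x \<notin> IX \<longrightarrow> g x = x" "good Sg g"
    using assms(2) H_iff by blast
  have fSf: "finite Sf" and rf: "\<forall>x\<in>IX. rloc f x" and lf: "\<forall>x\<in>IX - Sf. lloc f x"
    using bf(3) unfolding good_def by auto
  have fSg: "finite Sg" and rg: "\<forall>x\<in>IX. rloc g x" and lg: "\<forall>x\<in>IX - Sg. lloc g x"
    using bg(3) unfolding good_def by auto
  have gIX: "\<And>x. x \<in> IX \<Longrightarrow> g x \<in> IX" using bg(1) bij_betwE by blast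
  define S where "S = Sg \<union> (g -` Sf \<inter> IX)"
  have "good S (f \<circ> g)"
    unfolding good_def
  proof (intro conjI ballI)
    show "finite S" unfolding S_def
      using fSg finite_vimage_IntI[OF fSf bij_betw_imp_inj_on[OF bg(1)]] by simp
  next
    fix x assume x: "x \<in> IX"
    obtain d1 where d1: "d1 > 0" "\<And>y. x \<le> y \<and> y < x + d1 \<Longrightarrow> g y = y + (g x - x)"
      using rg x unfolding rloc_def by blast
    obtain d2 where d2: "d2 > 0" "\<And>y. g x \<le> y \<and> y < g x + d2 \<Longrightarrow> f y = y + (f (g x) - g x)"
      using rf gIX[OF x] unfolding rloc_def by blast
    show "rloc (f \<circ> g) x" unfolding rloc_def
    proof (intro exI[of _ "min d1 d2"] conjI allI impI)
      show "0 < min d1 d2" using d1(1) d2(1) by simp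
      fix y assume y: "x \<le> y \<and> y < x + min d1 d2"
      have m: "min d1 d2 \<le> d1" "min d1 d2 \<le> d2" by simp_all
      have "x \<le> y \<and> y < x + d1" using y m by linarith
      then have gy: "g y = y + (g x - x)" by (rule d1(2))
      have "g x \<le> g y \<and> g y < g x + d2" using y m gy by linarith
      then have "f (g y) = g y + (f (g x) - g x)" by (rule d2(2))
      then show "(f \<circ> g) y = y + ((f \<circ> g) x - x)" unfolding comp_def using gy by linarith
    qed
  next
    fix x assume x: "x \<in> IX - S"
    then have xI: "x \<in> IX" "x \<notin> Sg" "g x \<notin> Sf" by (auto simp: S_def)
    obtain d1 where d1: "d1 > 0" "\<And>y. x - d1 < y \<and> y \<le> x \<Longrightarrow> g y = y + (g x - x)"
      using lg xI unfolding lloc_def by blast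
    obtain d2 where d2: "d2 > 0" "\<And>y. g x - d2 < y \<and> y \<le> g x \<Longrightarrow> f y = y + (f (g x) - g x)"
      using lf gIX[OF xI(1)] xI unfolding lloc_def by blast
    show "lloc (f \<circ> g) x" unfolding lloc_def
    proof (intro exI[of _ "min d1 d2"] conjI allI impI)
      show "0 < min d1 d2" using d1(1) d2(1) by simp
      fix y assume y: "x - min d1 d2 < y \<and> y \<le> x"
      have m: "min d1 d2 \<le> d1" "min d1 d2 \<le> d2" by simp_all
      have "x - d1 < y \<and> y \<le> x" using y m by linarith
      then have gy: "g y = y + (g x - x)" by (rule d1(2))
      have "g x - d2 < g y \<and> g y \<le> g x" using y m gy by linarith
      then have "f (g y) = g y + (f (g x) - g x)" by (rule d2(2))
      then show "(f \<circ> g) y = y + ((f \<circ> g) x - x)" unfolding comp_def using gy by linarith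
    qed
  qed
  moreover have "bij_betw (f \<circ> g) IX IX" using bij_betw_trans[OF bg(1) bf(1)] .
  moreover have "\<forall>x. x \<notin> IX \<longrightarrow> (f \<circ> g) x = x" using bf(2) bg(2) by simp
  ultimately show ?thesis using H_iff by blast
qed

lemma H_inv:
  assumes "g \<in> IET_plus_rc"
  shows "inv g \<in> IET_plus_rc"
proof -
  obtain Sg where bg: "bij_betw g IX IX" "\<forall>x. x \<notin> IX \<longrightarrow> g x = x" "good Sg g"
    using assms H_iff by blast
  have fSg: "finite Sg" and rg: "\<forall>x\<in>IX. rloc g x" and lg: "\<forall>x\<in>IX - Sg. lloc g x"
    using bg(3) unfolding good_def by auto
  note ig = inv_IX[OF bg(1) bg(2)]
  have iIX: "\<And>y. y \<in> IX \<Longrightarrow> inv g y \<in> IX" using ig(1) bij_betwE by blast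
  have "good (g ` Sg) (inv g)"
    unfolding good_def
  proof (intro conjI ballI)
    show "finite (g ` Sg)" using fSg by simp
  next
    fix y assume y: "y \<in> IX"
    define x where "x = inv g y"
    have x: "x \<in> IX" "g x = y" using iIX[OF y] ig(4) by (auto simp: x_def)
    obtain d where d: "d > 0" "\<And>z. x \<le> z \<and> z < x + d \<Longrightarrow> g z = z + (g x - x)"
      using rg x unfolding rloc_def by blast
    show "rloc (inv g) y" unfolding rloc_def
    proof (intro exI[of _ d] conjI allI impI)
      show "0 < d" using d(1) .
      fix z assume z: "y \<le> z \<and> z < y + d"
      define w where "w = z - y + x"
      have "x \<le> w \<and> w < x + d" using z by (simp add: w_def)
      then have "g w = w + (g x - x)" by (rule d(2))
      then have "g w = z" using x(2) by (simp add: w_def)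
      then have "inv g z = w" using ig(3)[of w] by simp
      then show "inv g z = z + (inv g y - y)" by (simp add: w_def x_def)
    qed
  next
    fix y assume y: "y \<in> IX - g ` Sg"
    define x where "x = inv g y"
    have x: "x \<in> IX" "g x = y" using iIX y ig(4) by (auto simp: x_def)
    have xS: "x \<notin> Sg" using x y by auto
    obtain d where d: "d > 0" "\<And>z. x - d < z \<and> z \<le> x \<Longrightarrow> g z = z + (g x - x)"
      using lg x xS unfolding lloc_def by blast
    show "lloc (inv g) y" unfolding lloc_def
    proof (intro exI[of _ d] conjI allI impI)
      show "0 < d" using d(1) .
      fix z assume z: "y - d < z \<and> z \<le> y"
      define w where "w = z - y + x"
      have "x - d < w \<and> w \<le> x" using z by (simp add: w_def)
      then have "g w = w + (g x - x)" by (rule d(2))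
      then have "g w = z" using x(2) by (simp add: w_def)
      then have "inv g z = w" using ig(3)[of w] by simp
      then show "inv g z = z + (inv g y - y)" by (simp add: w_def x_def)
    qed
  qed
  then show ?thesis using ig(1,2) H_iff by blast
qed


definition sw :: "real \<Rightarrow> real \<Rightarrow> real \<Rightarrow> real" where
  "sw p L y = (if p \<le> y \<and> y < p + L then y + L else if p + L \<le> y \<and> y < p + 2*L then y - L else y)"

lemma sw_in:
  assumes p: "0 \<le> p" and L: "0 < L" and pL: "p + 2*L \<le> 1"
  shows "sw p L \<in> IET_plus_rc"
proof -
  have inv: "\<And>y. sw p L (sw p L y) = y" using L by (auto simp: sw_def)
  have maps: "\<And>y. y \<in> IX \<Longrightarrow> sw p L y \<in> IX" using p L pL by (auto simp: sw_def IX_def)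
  have bij: "bij_betw (sw p L) IX IX"
    by (rule bij_betw_byWitness[where f'="sw p L"]) (use inv maps in auto)
  have out: "\<forall>x. x \<notin> IX \<longrightarrow> sw p L x = x" using p L pL by (auto simp: sw_def IX_def)
  have "good {p, p + L, p + 2*L} (sw p L)"
    unfolding good_def
  proof (intro conjI ballI)
    show "finite {p, p + L, p + 2*L}" by simp
  next
    fix x assume x: "x \<in> IX"
    consider "x < p" | "p \<le> x \<and> x < p + L" | "p + L \<le> x \<and> x < p + 2*L" | "p + 2*L \<le> x" by linarith
    then show "rloc (sw p L) x"
    proof cases
      case 1 then show ?thesis unfolding rloc_def
        by (intro exI[of _ "p - x"]) (auto simp: sw_def)
    next
      case 2 then show ?thesis unfolding rloc_def
        by (intro exI[of _ "p + L - x"]) (auto simp: sw_def)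
    next
      case 3 then show ?thesis unfolding rloc_def
        by (intro exI[of _ "p + 2*L - x"]) (auto simp: sw_def)
    next
      case 4 then show ?thesis unfolding rloc_def using L
        by (intro exI[of _ 1]) (auto simp: sw_def)
    qed
  next
    fix x assume x: "x \<in> IX - {p, p + L, p + 2*L}"
    then have xn: "x \<noteq> p" "x \<noteq> p + L" "x \<noteq> p + 2*L" by auto
    consider "x < p" | "p < x \<and> x < p + L" | "p + L < x \<and> x < p + 2*L" | "p + 2*L < x"
      using xn by linarith
    then show "lloc (sw p L) x"
    proof cases
      case 1 then show ?thesis unfolding lloc_def
        by (intro exI[of _ 1]) (auto simp: sw_def)
    next
      case 2 then show ?thesis unfolding lloc_def
        by (intro exI[of _ "x - p"]) (auto simp: sw_def)
    next
      case 3 then show ?thesis unfolding lloc_def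
        by (intro exI[of _ "x - (p + L)"]) (auto simp: sw_def)
    next
      case 4 then show ?thesis unfolding lloc_def using L
        by (intro exI[of _ "x - (p + 2*L)"]) (auto simp: sw_def)
    qed
  qed
  then show ?thesis using bij out H_iff by blast
qed

lemma part_mono:
  fixes a :: "nat \<Rightarrow> real"
  assumes am: "\<forall>i<n. a i < a (Suc i)"
  shows "j \<le> n \<Longrightarrow> i \<le> j \<Longrightarrow> a i \<le> a j"
proof (induction j)
  case 0 then show ?case by simp
next
  case (Suc j)
  show ?case
  proof (cases "i = Suc j")
    case True then show ?thesis by simp
  next
    case False
    then have "a i \<le> a j" using Suc by simp
    moreover have "a j < a (Suc j)" using am Suc.prems by simp
    ultimately show ?thesis by simp
  qed
qed


lemma normalizer_rloc:
  assumes g: "g \<in> normalizer IET_bowtie IET_plus_rc" and x0: "x0 \<in> IX"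
  shows "rloc g x0"
proof -
  have gb: "g \<in> IET_bowtie" and img: "(\<lambda>h. g \<circ> h \<circ> inv g) ` IET_plus_rc = IET_plus_rc"
    using g unfolding normalizer_def by auto
  have b: "bij_betw g IX IX" "\<forall>x. x \<notin> IX \<longrightarrow> g x = x" "piecewise_isometric True g"
    using gb unfolding IET_bowtie_def by auto
  note ig = inv_IX[OF b(1) b(2)]
  have backc: "inv g \<circ> h \<circ> g \<in> IET_plus_rc" if h: "h \<in> IET_plus_rc" for h
  proof -
    have "h \<in> (\<lambda>h. g \<circ> h \<circ> inv g) ` IET_plus_rc" using img h by simp
    then obtain h' where h': "h' \<in> IET_plus_rc" "h = g \<circ> h' \<circ> inv g" by auto
    have "inv g \<circ> h \<circ> g = h'" using h'(2) ig(3) by (simp add: fun_eq_iff)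
    then show ?thesis using h'(1) by simp
  qed
  define y0 where "y0 = g x0"
  have y0: "y0 \<in> IX" using b(1) x0 bij_betwE unfolding y0_def by blast
  then have y01: "0 \<le> y0" "y0 < 1" by (auto simp: IX_def)
  have key: False if L: "0 < L" "y0 + 2*L \<le> 1" and eta: "0 < \<eta>"
    and avoid: "\<forall>x. x0 < x \<and> x < x0 + \<eta> \<longrightarrow> \<not> (y0 \<le> g x \<and> g x < y0 + 2*L)" for L \<eta>
  proof -
    have swH: "sw y0 L \<in> IET_plus_rc" using sw_in y01 L by simp
    define k where "k = inv g \<circ> sw y0 L \<circ> g"
    have kH: "k \<in> IET_plus_rc" using backc[OF swH] unfolding k_def .
    have "continuous (at_right x0) k" using kH x0 unfolding IET_plus_rc_def by auto
    then have t1: "(k \<longlongrightarrow> k x0) (at_right x0)" unfolding continuous_within .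
    have ev: "eventually (\<lambda>x. x = k x) (at_right x0)"
      unfolding eventually_at_right_field
    proof (intro exI[of _ "x0 + \<eta>"] conjI allI impI)
      show "x0 < x0 + \<eta>" using eta by simp
      fix x assume "x0 < x" "x < x0 + \<eta>"
      then have "\<not> (y0 \<le> g x \<and> g x < y0 + 2*L)" using avoid by blast
      then have "sw y0 L (g x) = g x" using L by (auto simp: sw_def)
      then show "x = k x" using ig(3) by (simp add: k_def)
    qed
    have t2: "(k \<longlongrightarrow> x0) (at_right x0)" using Lim_transform_eventually[OF _ ev] by simp
    have "k x0 = x0" using tendsto_unique[OF trivial_limit_at_right_real t1 t2] .
    moreover have "sw y0 L (g x0) = y0 + L" using L by (simp add: sw_def y0_def)
    then have "k x0 = inv g (y0 + L)" by (simp add: k_def)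
    ultimately have "inv g (y0 + L) = x0" by simp
    then have "g x0 = y0 + L" using ig(4)[of "y0 + L"] by simp
    then show False using L y0_def by simp
  qed
  obtain n a where a0: "a 0 = 0" and an: "a n = 1" and am: "\<forall>i<n. a i < a (Suc i)"
    and pc: "\<forall>i<n. \<exists>c. (\<forall>x\<in>{a i<..<a (Suc i)}. g x = x + c) \<or> (\<forall>x\<in>{a i<..<a (Suc i)}. g x = - x + c)"
    using b(3) unfolding piecewise_isometric_def by auto
  obtain i where i: "i < n" "a i \<le> x0" "x0 < a (Suc i)" using find_piece[OF a0 an x0] by auto
  obtain c where c: "(\<forall>x\<in>{a i<..<a (Suc i)}. g x = x + c) \<or> (\<forall>x\<in>{a i<..<a (Suc i)}. g x = - x + c)"
    using pc i by blast
  define \<delta> where "\<delta> = a (Suc i) - x0"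
  have dpos: "0 < \<delta>" using i by (simp add: \<delta>_def)
  have sub: "x \<in> {a i<..<a (Suc i)}" if "x0 < x" "x < x0 + \<delta>" for x
    using that i by (auto simp: \<delta>_def)
  from c show ?thesis
  proof
    assume tr: "\<forall>x\<in>{a i<..<a (Suc i)}. g x = x + c"
    have gx: "g x = x + c" if "x0 < x" "x < x0 + \<delta>" for x using tr sub[OF that] by blast
    define z where "z = x0 + c"
    consider "z < y0" | "z > y0" | "z = y0" by linarith
    then show ?thesis
    proof cases
      case 1
      define \<eta> where "\<eta> = min \<delta> (y0 - z)"
      have e: "0 < \<eta>" "\<eta> \<le> \<delta>" "\<eta> \<le> y0 - z" using dpos 1 by (auto simp: \<eta>_def)
      show ?thesis
      proof (rule FalseE, rule key[of "(1 - y0) / 2" \<eta>])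
        show "0 < (1 - y0) / 2" using y01 by simp
        show "y0 + 2 * ((1 - y0) / 2) \<le> 1" by (simp add: field_simps)
        show "0 < \<eta>" using e by simp
        show "\<forall>x. x0 < x \<and> x < x0 + \<eta> \<longrightarrow> \<not> (y0 \<le> g x \<and> g x < y0 + 2 * ((1 - y0) / 2))"
        proof (intro allI impI)
          fix x assume x: "x0 < x \<and> x < x0 + \<eta>"
          then have "g x = x + c" using gx e by simp
          then show "\<not> (y0 \<le> g x \<and> g x < y0 + 2 * ((1 - y0) / 2))" using x e z_def by linarith
        qed
      qed
    next
      case 2
      define L where "L = min (z - y0) (1 - y0) / 2"
      have l: "0 < L" "2 * L \<le> z - y0" "2 * L \<le> 1 - y0" using 2 y01 by (auto simp: L_def)
      show ?thesis
      proof (rule FalseE, rule key[of L \<delta>])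
        show "0 < L" "y0 + 2 * L \<le> 1" "0 < \<delta>" using l dpos by auto
        show "\<forall>x. x0 < x \<and> x < x0 + \<delta> \<longrightarrow> \<not> (y0 \<le> g x \<and> g x < y0 + 2 * L)"
        proof (intro allI impI)
          fix x assume x: "x0 < x \<and> x < x0 + \<delta>"
          then have "g x = x + c" using gx by simp
          then show "\<not> (y0 \<le> g x \<and> g x < y0 + 2 * L)" using x l z_def by linarith
        qed
      qed
    next
      case 3
      show ?thesis unfolding rloc_def
      proof (intro exI[of _ \<delta>] conjI allI impI)
        show "0 < \<delta>" using dpos .
        fix y assume y: "x0 \<le> y \<and> y < x0 + \<delta>"
        show "g y = y + (g x0 - x0)"
        proof (cases "y = x0")
          case True then show ?thesis by simp
        next
          case False
          then have "g y = y + c" using gx y by simp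
          then show ?thesis using 3 z_def y0_def by simp
        qed
      qed
    qed
  next
    assume fl: "\<forall>x\<in>{a i<..<a (Suc i)}. g x = - x + c"
    have gx: "g x = - x + c" if "x0 < x" "x < x0 + \<delta>" for x using fl sub[OF that] by blast
    define z where "z = c - x0"
    consider "z \<le> y0" | "z > y0" by linarith
    then show ?thesis
    proof cases
      case 1
      show ?thesis
      proof (rule FalseE, rule key[of "(1 - y0) / 2" \<delta>])
        show "0 < (1 - y0) / 2" using y01 by simp
        show "y0 + 2 * ((1 - y0) / 2) \<le> 1" by (simp add: field_simps)
        show "0 < \<delta>" using dpos by simp
        show "\<forall>x. x0 < x \<and> x < x0 + \<delta> \<longrightarrow> \<not> (y0 \<le> g x \<and> g x < y0 + 2 * ((1 - y0) / 2))"
        proof (intro allI impI)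
          fix x assume x: "x0 < x \<and> x < x0 + \<delta>"
          then have "g x = - x + c" using gx by simp
          then show "\<not> (y0 \<le> g x \<and> g x < y0 + 2 * ((1 - y0) / 2))" using x 1 z_def by linarith
        qed
      qed
    next
      case 2
      define L where "L = min (z - y0) (1 - y0) / 4"
      define \<eta> where "\<eta> = min \<delta> ((z - y0) / 2)"
      have l: "0 < L" "4 * L \<le> z - y0" "2 * L \<le> 1 - y0" using 2 y01 by (auto simp: L_def)
      have e1: "0 < \<eta>" using dpos 2 by (simp add: \<eta>_def)
      have e2: "\<eta> \<le> \<delta>" unfolding \<eta>_def by (rule min.cobounded1)
      have e3: "\<eta> \<le> (z - y0) / 2" unfolding \<eta>_def by (rule min.cobounded2)
      have e4: "2 * \<eta> \<le> z - y0" using e3 by (simp add: field_simps)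
      note e = e1 e2 e4
      show ?thesis
      proof (rule FalseE, rule key[of L \<eta>])
        show "0 < L" "y0 + 2 * L \<le> 1" "0 < \<eta>" using l e by auto
        show "\<forall>x. x0 < x \<and> x < x0 + \<eta> \<longrightarrow> \<not> (y0 \<le> g x \<and> g x < y0 + 2 * L)"
        proof (intro allI impI)
          fix x assume x: "x0 < x \<and> x < x0 + \<eta>"
          then have "g x = - x + c" using gx e by simp
          then show "\<not> (y0 \<le> g x \<and> g x < y0 + 2 * L)" using x l e z_def by linarith
        qed
      qed
    qed
  qed
qed

theorem proposition5p3:
  shows "normalizer IET_bowtie IET_plus_rc = IET_plus_rc"
proof
  show "normalizer IET_bowtie IET_plus_rc \<subseteq> IET_plus_rc"
  proof
    fix g assume g: "g \<in> normalizer IET_bowtie IET_plus_rc"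
    have gb: "g \<in> IET_bowtie" using g unfolding normalizer_def by auto
    have b: "bij_betw g IX IX" "\<forall>x. x \<notin> IX \<longrightarrow> g x = x" "piecewise_isometric True g"
      using gb unfolding IET_bowtie_def by auto
    have rl: "\<forall>x\<in>IX. rloc g x" using normalizer_rloc g by blast
    have rc: "\<forall>x\<in>IX. continuous (at_right x) g" using rl rloc_rc by blast
    obtain n a where a0: "a 0 = 0" and an: "a n = 1" and am: "\<forall>i<n. a i < a (Suc i)"
      and pc: "\<forall>i<n. \<exists>c. (\<forall>x\<in>{a i<..<a (Suc i)}. g x = x + c) \<or> (\<forall>x\<in>{a i<..<a (Suc i)}. g x = - x + c)"
      using b(3) unfolding piecewise_isometric_def by auto
    have pw: "\<forall>i<n. \<exists>c. \<forall>x\<in>{a i<..<a (Suc i)}. g x = x + c"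
    proof (intro allI impI)
      fix i assume i: "i < n"
      obtain c where c: "(\<forall>x\<in>{a i<..<a (Suc i)}. g x = x + c) \<or> (\<forall>x\<in>{a i<..<a (Suc i)}. g x = - x + c)"
        using pc i by blast
      show "\<exists>c. \<forall>x\<in>{a i<..<a (Suc i)}. g x = x + c"
      proof (cases "\<forall>x\<in>{a i<..<a (Suc i)}. g x = x + c")
        case True then show ?thesis by blast
      next
        case False
        then have fl: "\<forall>x\<in>{a i<..<a (Suc i)}. g x = - x + c" using c by blast
        define m where "m = (a i + a (Suc i)) / 2"
        have mA: "a i < m" "m < a (Suc i)" using am i by (auto simp: m_def)
        have "a 0 \<le> a i" "a (Suc i) \<le> a n" using part_mono[OF am] i by auto
        then have mIX: "m \<in> IX" using mA a0 an by (auto simp: IX_def)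
        obtain d where d: "d > 0" "\<And>y. m \<le> y \<and> y < m + d \<Longrightarrow> g y = y + (g m - m)"
          using rl mIX unfolding rloc_def by blast
        define mh where "mh = min d (a (Suc i) - m)"
        have mm: "0 < mh" "mh \<le> d" "mh \<le> a (Suc i) - m"
          using d(1) mA by (auto simp: mh_def)
        define y where "y = m + mh / 2"
        have y1: "m < y" unfolding y_def using mm by simp
        have y2: "y < m + d" unfolding y_def using mm by (simp add: field_simps)
        have y3: "y < a (Suc i)" unfolding y_def using mm by (simp add: field_simps)
        note y = y1 y2 y3
        have "m \<le> y \<and> y < m + d" using y by simp
        then have "g y = y + (g m - m)" by (rule d(2))
        moreover have "g y = - y + c" using fl y mA by simp
        moreover have "g m = - m + c" using fl mA by simp
        ultimately have False using y by linarith
        then show ?thesis ..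
      qed
    qed
    have "piecewise_isometric False g"
      unfolding piecewise_isometric_def
      apply (rule exI[of _ n], rule exI[of _ a])
      using a0 an am pw by simp
    then show "g \<in> IET_plus_rc" using b rc by (simp add: IET_plus_rc_def IET_plus_def)
  qed
next
  show "IET_plus_rc \<subseteq> normalizer IET_bowtie IET_plus_rc"
  proof
    fix g assume g: "g \<in> IET_plus_rc"
    have b: "bij_betw g IX IX" "\<forall>x. x \<notin> IX \<longrightarrow> g x = x" "piecewise_isometric False g"
      using g unfolding IET_plus_rc_def IET_plus_def by auto
    obtain n a where a0: "a 0 = 0" and an: "a n = 1" and am: "\<forall>i<n. a i < a (Suc i)"
      and pc: "\<forall>i<n. \<exists>c. \<forall>x\<in>{a i<..<a (Suc i)}. g x = x + c"
      using b(3) unfolding piecewise_isometric_def by auto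
    have "piecewise_isometric True g"
      unfolding piecewise_isometric_def
      apply (rule exI[of _ n], rule exI[of _ a])
      using a0 an am pc by blast
    then have gb: "g \<in> IET_bowtie" using b unfolding IET_bowtie_def by simp
    note ig = inv_IX[OF b(1) b(2)]
    have img: "(\<lambda>h. g \<circ> h \<circ> inv g) ` IET_plus_rc = IET_plus_rc"
    proof
      show "(\<lambda>h. g \<circ> h \<circ> inv g) ` IET_plus_rc \<subseteq> IET_plus_rc"
      proof (rule image_subsetI)
        fix h assume h: "h \<in> IET_plus_rc"
        show "g \<circ> h \<circ> inv g \<in> IET_plus_rc" by (intro H_comp H_inv g h)
      qed
    next
      show "IET_plus_rc \<subseteq> (\<lambda>h. g \<circ> h \<circ> inv g) ` IET_plus_rc"
      proof
        fix h assume h: "h \<in> IET_plus_rc"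
        define h' where "h' = inv g \<circ> h \<circ> g"
        have h'H: "h' \<in> IET_plus_rc" unfolding h'_def by (intro H_comp H_inv g h)
        have "g \<circ> h' \<circ> inv g = h" using ig(4) by (simp add: h'_def fun_eq_iff)
        then show "h \<in> (\<lambda>h. g \<circ> h \<circ> inv g) ` IET_plus_rc" using h'H by (metis image_eqI)
      qed
    qed
    show "g \<in> normalizer IET_bowtie IET_plus_rc" unfolding normalizer_def using gb img by simp
  qed
qed

end
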